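(* Let $f:\mathbb{R}^d\to\mathbb{R}$ be continuously differentiable, and let $\tilde F_{\ell_1}$ be as defined in the context. Then for every $x\in\mathbb{R}^d$, \[ \mathcal F[\tilde F_{\ell_1}](x)\ \subseteq\ \overline{\operatorname{conv}}\Bigl\{-\,s\,e^{(i)}:\ i\in\mathcal I(x),\ s\in\operatorname{Sign}(\partial_i f(x))\Bigr\}. \]
   Context: $e^{(i)}$ is the $i$-th standard basis vector of $\mathbb{R}^d$; $\operatorname{sign}(u)\in\{-1,0,1\}$ with $\operatorname{sign}(0)=0$; $\operatorname{Sign}(u)=\{1\}$ if $u>0$, $[-1,1]$ if $u=0$, $\{-1\}$ if $u<0$. $\mathcal I(x):=\{i:\ |\partial_i f(x)|=\max_{1\le j\le d}|\partial_j f(x)|\}$. $\tilde F_{\ell_1}:\mathbb{R}^d\to\mathbb{R}^d$ is any function with $\tilde F_{\ell_1}(y)\in\{-\operatorname{sign}(\partial_i f(y))\,e^{(i)}:\ i\in\mathcal I(y)\}$ for all $y$. For $F:\mathbb{R}^d\to\mathbb{R}^d$, the Filippov set is $\mathcal F[F](x):=\bigcap_{\delta>0}\overline{\operatorname{conv}}\{F(y):\ \|y-x\|<\delta\}$. *)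

theory Defs
  imports "HOL-Analysis.Analysis"
begin

definition partial_deriv :: "(real^'n \<Rightarrow> real) \<Rightarrow> 'n \<Rightarrow> real^'n \<Rightarrow> real" where
  "partial_deriv f i x = frechet_derivative f (at x) (axis i 1)"

definition C1 :: "(real^'n \<Rightarrow> real) \<Rightarrow> bool" where
  "C1 f \<longleftrightarrow> (\<forall>x. f differentiable (at x)) \<and> (\<forall>i. continuous_on UNIV (partial_deriv f i))"

definition Sign :: "real \<Rightarrow> real set" where
  "Sign u = (if u > 0 then {1} else if u < 0 then {-1} else {-1..1})"

definition maxidx :: "(real^'n \<Rightarrow> real) \<Rightarrow> real^'n \<Rightarrow> 'n set" where
  "maxidx f x = {i. \<forall>j. \<bar>partial_deriv f j x\<bar> \<le> \<bar>partial_deriv f i x\<bar>}"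

definition filippov :: "(real^'n \<Rightarrow> real^'n) \<Rightarrow> real^'n \<Rightarrow> (real^'n) set" where
  "filippov F x = (\<Inter>\<delta>\<in>{0<..}. closure (convex hull (F ` ball x \<delta>)))"

definition is_Fl1 :: "(real^'n \<Rightarrow> real) \<Rightarrow> (real^'n \<Rightarrow> real^'n) \<Rightarrow> bool" where
  "is_Fl1 f F \<longleftrightarrow> (\<forall>y. F y \<in> {- (sgn (partial_deriv f i y)) *\<^sub>R axis i 1 | i. i \<in> maxidx f y})"

end

theory Submission
  imports Defs
begin

lemma sgn_in_Sign_self: "sgn (u::real) \<in> Sign u"
  by (auto simp: Sign_def sgn_real_def)

lemma ev_idx:
  fixes f :: "real^'n \<Rightarrow> real"
  assumes "C1 f"
  shows "eventually (\<lambda>y. i \<in> maxidx f y \<longrightarrow> i \<in> maxidx f x) (at x)"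
proof (cases "i \<in> maxidx f x")
  case True thus ?thesis by simp
next
  case False
  then obtain j where j: "\<bar>partial_deriv f i x\<bar> < \<bar>partial_deriv f j x\<bar>"
    unfolding maxidx_def by (auto simp: not_le)
  have c: "\<And>k. isCont (partial_deriv f k) x"
    using assms unfolding C1_def by (simp add: continuous_on_eq_continuous_at)
  have "((\<lambda>y. \<bar>partial_deriv f j y\<bar> - \<bar>partial_deriv f i y\<bar>) \<longlongrightarrow>
          \<bar>partial_deriv f j x\<bar> - \<bar>partial_deriv f i x\<bar>) (at x)"
    by (intro tendsto_intros) (use c in \<open>auto simp: isCont_def\<close>)
  hence "eventually (\<lambda>y. \<bar>partial_deriv f j y\<bar> - \<bar>partial_deriv f i y\<bar> > 0) (at x)"
    using j by (intro order_tendstoD) auto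
  thus ?thesis
    by eventually_elim (auto simp: maxidx_def intro: exI[of _ j] dest: spec[of _ j])
qed

lemma ev_sign:
  fixes f :: "real^'n \<Rightarrow> real"
  assumes "C1 f"
  shows "eventually (\<lambda>y. sgn (partial_deriv f i y) \<in> Sign (partial_deriv f i x)) (at x)"
proof -
  have c: "((partial_deriv f i) \<longlongrightarrow> partial_deriv f i x) (at x)"
    using assms unfolding C1_def by (simp add: continuous_on_eq_continuous_at isCont_def)
  consider "partial_deriv f i x > 0" | "partial_deriv f i x < 0" | "partial_deriv f i x = 0"
    by linarith
  thus ?thesis
  proof cases
    case 1
    have "eventually (\<lambda>y. partial_deriv f i y > 0) (at x)"
      using order_tendstoD(1)[OF c 1] .
    thus ?thesis by eventually_elim (use 1 in \<open>auto simp: Sign_def\<close>)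
  next
    case 2
    have "eventually (\<lambda>y. partial_deriv f i y < 0) (at x)"
      using order_tendstoD(2)[OF c 2] .
    thus ?thesis by eventually_elim (use 2 in \<open>auto simp: Sign_def\<close>)
  next
    case 3
    thus ?thesis by (auto simp: Sign_def sgn_real_def)
  qed
qed

theorem lemma4p1:
  fixes f :: "real^'n \<Rightarrow> real" and F :: "real^'n \<Rightarrow> real^'n"
  assumes "C1 f" and "is_Fl1 f F"
  shows "filippov F x \<subseteq>
    closure (convex hull {- s *\<^sub>R axis i 1 | i s. i \<in> maxidx f x \<and> s \<in> Sign (partial_deriv f i x)})"
proof -
  define S :: "(real^'n) set" where "S = {- s *\<^sub>R axis i 1 | i s. i \<in> maxidx f x \<and> s \<in> Sign (partial_deriv f i x)}"
  have ev: "eventually (\<lambda>y. \<forall>i. (i \<in> maxidx f y \<longrightarrow> i \<in> maxidx f x) \<and>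
      sgn (partial_deriv f i y) \<in> Sign (partial_deriv f i x)) (at x)"
    using ev_idx[OF assms(1)] ev_sign[OF assms(1)]
    by (intro eventually_all_finite) (simp add: eventually_conj)
  have FS: "F y \<in> S" if "\<forall>i. (i \<in> maxidx f y \<longrightarrow> i \<in> maxidx f x) \<and>
      sgn (partial_deriv f i y) \<in> Sign (partial_deriv f i x)" for y
  proof -
    obtain i where "i \<in> maxidx f y" "F y = - (sgn (partial_deriv f i y)) *\<^sub>R axis i 1"
      using assms(2) unfolding is_Fl1_def by blast
    thus ?thesis using that unfolding S_def by blast
  qed
  have Fx: "F x \<in> S"
  proof -
    obtain i where "i \<in> maxidx f x" "F x = - (sgn (partial_deriv f i x)) *\<^sub>R axis i 1"
      using assms(2) unfolding is_Fl1_def by blast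
    thus ?thesis using sgn_in_Sign_self unfolding S_def by blast
  qed
  obtain d where d: "d > 0" "\<And>y. y \<noteq> x \<Longrightarrow> dist y x < d \<Longrightarrow> F y \<in> S"
    using ev FS unfolding eventually_at by (meson UNIV_I)
  have "F ` ball x d \<subseteq> S"
    using d Fx by (auto simp: dist_commute) (metis)
  hence "closure (convex hull (F ` ball x d)) \<subseteq> closure (convex hull S)"
    by (intro closure_mono hull_mono)
  moreover have "filippov F x \<subseteq> closure (convex hull (F ` ball x d))"
    unfolding filippov_def using d(1) by blast
  ultimately show ?thesis unfolding S_def by blast
qed

end
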